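(* Let $A_1,\dots,A_m$ be open subsets of $\mathbb{R}^d$. Assume that each $A_i$ is a homology cell and that the union of any at most $d$ of them is a homology cell. Then $\bigcap_{i=1}^m A_i$ is either empty or a homology cell.
   Context: A topological space $X$ is a homology cell if it is nonempty and all its reduced singular homology groups (with integer coefficients) vanish, i.e. $\tilde H_i(X)=0$ for all $i$. *)

theory Defs
  imports "HOL-Analysis.Analysis" "HOL-Homology.Homology"
begin

definition homology_cell :: "'a topology \<Rightarrow> bool" where
  "homology_cell X \<longleftrightarrow> topspace X \<noteq> {} \<and> (\<forall>p. trivial_group (reduced_homology_group p X))"

end

theory Submission
  imports Defs
begin

lemma exact_surj:
  assumes "exact_seq ([G1,G2,G3],[f,g])" "trivial_group G1"
  shows "g ` carrier G3 = carrier G2"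
proof -
  have f: "f \<in> hom G2 G1" and k: "kernel G2 G1 f = g ` carrier G3"
    using assms(1) by auto
  have "kernel G2 G1 f = carrier G2"
    using f assms(2) by (auto simp: kernel_def trivial_group_def hom_def)
  with k show ?thesis by simp
qed

lemma exact_triv:
  assumes "exact_seq ([G1,G2,G3],[f,g])" "trivial_group G1" "trivial_group G3"
  shows "trivial_group G2"
proof -
  have gh: "group_hom G3 G2 g" and gr: "group G2" using assms(1) by (auto simp: group_hom_def)
  have "carrier G2 = g ` carrier G3" using exact_surj[OF assms(1,2)] by simp
  also have "\<dots> = {one G2}" using assms(3) gh by (simp add: trivial_group_def group_hom.hom_one)
  finally show ?thesis using gr by (simp add: trivial_group_def)
qed

lemma triv_image:
  assumes "h \<in> hom G H" "trivial_group G" "h ` carrier G = carrier H" "group H"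
  shows "trivial_group H"
proof -
  have "carrier H \<subseteq> {h (one G)}" using assms(2,3) by (auto simp: trivial_group_def)
  then show ?thesis using group.trivial_group_alt[OF assms(4)] by blast
qed

lemma mv_step:
  fixes U V :: "'a::topological_space set"
  assumes oU: "open U" and oV: "open V"
    and tU: "trivial_group (reduced_homology_group p (subtopology euclidean U))"
    and tV: "trivial_group (reduced_homology_group p (subtopology euclidean V))"
    and tX: "trivial_group (reduced_homology_group (p+1) (subtopology euclidean (U \<union> V)))"
  shows "trivial_group (reduced_homology_group p (subtopology euclidean (U \<inter> V)))"
proof (cases "U \<inter> V = {}")
  case True
  then show ?thesis by (simp add: trivial_reduced_homology_group_empty)
next
  case False
  define X where "X = subtopology (euclidean::'a topology) (U \<union> V)"
  define Y where "Y = subtopology (euclidean::'a topology) U"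
  have pp: "p + 1 - 1 = p" by simp
  have e1: "exact_seq ([reduced_homology_group p (subtopology X V),
                     relative_homology_group (p+1) X V,
                     reduced_homology_group (p+1) X],
                    [hom_boundary (p+1) X V, hom_induced (p+1) X {} X V id])"
    using homology_exactness_reduced_1[of X V "p+1"] False unfolding pp
    by (auto simp: X_def)
  have sXV: "subtopology X V = subtopology euclidean V"
    by (simp add: X_def subtopology_subtopology Int_absorb1)
  have relX: "trivial_group (relative_homology_group (p+1) X V)"
    by (rule exact_triv[OF e1]) (use tV tX sXV X_def in auto)
  have exc: "hom_induced (p+1) (subtopology X ((U \<union> V) - (V - U))) (V - (V - U)) (subtopology X (U \<union> V)) V id
    \<in> iso (relative_homology_group (p+1) (subtopology X ((U \<union> V) - (V - U))) (V - (V - U)))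
          (relative_homology_group (p+1) (subtopology X (U \<union> V)) V)"
  proof (rule homology_excision_axiom)
    have "closedin X (V - U)"
      unfolding X_def closedin_subtopology
      by (rule exI[of _ "- U"]) (use oU in \<open>auto simp: closed_def\<close>)
    then have "X closure_of (V - U) = V - U" by (simp add: closure_of_eq)
    moreover have "openin X V"
      unfolding X_def openin_open using oV by (intro exI[of _ V]) auto
    then have "X interior_of V = V" by (simp add: interior_of_openin)
    ultimately show "X closure_of (V - U) \<subseteq> X interior_of V" by auto
  qed auto
  have s1: "subtopology X ((U \<union> V) - (V - U)) = Y"
    unfolding X_def Y_def subtopology_subtopology by (rule arg_cong[where f="subtopology euclidean"]) auto
  have s2: "V - (V - U) = U \<inter> V" by auto
  have s3: "subtopology X (U \<union> V) = X"
    unfolding X_def subtopology_subtopology by simp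
  have exc': "hom_induced (p+1) Y (U \<inter> V) X V id
    \<in> iso (relative_homology_group (p+1) Y (U \<inter> V)) (relative_homology_group (p+1) X V)"
    using exc unfolding s1 s2 s3 .
  have relY: "trivial_group (relative_homology_group (p+1) Y (U \<inter> V))"
    using exc' relX
    by (meson group_relative_homology_group is_isoI isomorphic_group_triviality)
  have e2: "exact_seq ([reduced_homology_group p Y,
                 reduced_homology_group p (subtopology Y (U \<inter> V)),
                 relative_homology_group (p+1) Y (U \<inter> V)],
                [hom_induced p (subtopology Y (U \<inter> V)) {} Y {} id, hom_boundary (p+1) Y (U \<inter> V)])"
    using homology_exactness_reduced_2[of "p+1" Y "U \<inter> V"] unfolding pp .
  have sY: "subtopology Y (U \<inter> V) = subtopology euclidean (U \<inter> V)"
    by (simp add: Y_def subtopology_subtopology Int_assoc[symmetric])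
  have surj: "hom_boundary (p+1) Y (U \<inter> V) ` carrier (relative_homology_group (p+1) Y (U \<inter> V))
      = carrier (reduced_homology_group p (subtopology Y (U \<inter> V)))"
    by (rule exact_surj[OF e2]) (use tU Y_def in auto)
  have hom: "hom_boundary (p+1) Y (U \<inter> V) \<in> hom (relative_homology_group (p+1) Y (U \<inter> V)) (reduced_homology_group p (subtopology Y (U \<inter> V)))"
    using e2 by (auto simp: group_hom_def group_hom_axioms_def)
  show ?thesis
    using triv_image[OF hom relY surj] sY by simp
qed

lemma mv_step2:
  fixes U V :: "'a::topological_space set"
  assumes oU: "open U" and oV: "open V" and j: "j \<noteq> 0"
    and tU: "trivial_group (reduced_homology_group j (subtopology euclidean U))"
    and tV: "trivial_group (reduced_homology_group j (subtopology euclidean V))"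
    and tI: "trivial_group (reduced_homology_group (j-1) (subtopology euclidean (U \<inter> V)))"
  shows "trivial_group (reduced_homology_group j (subtopology euclidean (U \<union> V)))"
proof -
  define X where "X = subtopology (euclidean::'a topology) (U \<union> V)"
  define Y where "Y = subtopology (euclidean::'a topology) U"
  have sY: "subtopology Y (U \<inter> V) = subtopology euclidean (U \<inter> V)"
    by (simp add: Y_def subtopology_subtopology Int_assoc[symmetric])
  have relY: "trivial_group (relative_homology_group j Y (U \<inter> V))"
  proof (cases "U \<inter> V = {}")
    case True
    then show ?thesis using tU un_reduced_homology_group[OF j, of Y] by (simp add: Y_def)
  next
    case False
    have e1: "exact_seq ([reduced_homology_group (j-1) (subtopology Y (U \<inter> V)),
                     relative_homology_group j Y (U \<inter> V),
                     reduced_homology_group j Y],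
                    [hom_boundary j Y (U \<inter> V), hom_induced j Y {} Y (U \<inter> V) id])"
      using homology_exactness_reduced_1[of Y "U \<inter> V" j] False by (auto simp: Y_def)
    show ?thesis
      by (rule exact_triv[OF e1]) (use tI tU sY Y_def in auto)
  qed
  have exc: "hom_induced j (subtopology X ((U \<union> V) - (V - U))) (V - (V - U)) (subtopology X (U \<union> V)) V id
    \<in> iso (relative_homology_group j (subtopology X ((U \<union> V) - (V - U))) (V - (V - U)))
          (relative_homology_group j (subtopology X (U \<union> V)) V)"
  proof (rule homology_excision_axiom)
    have "closedin X (V - U)"
      unfolding X_def closedin_subtopology
      by (rule exI[of _ "- U"]) (use oU in \<open>auto simp: closed_def\<close>)
    then have "X closure_of (V - U) = V - U" by (simp add: closure_of_eq)
    moreover have "openin X V"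
      unfolding X_def openin_open using oV by (intro exI[of _ V]) auto
    then have "X interior_of V = V" by (simp add: interior_of_openin)
    ultimately show "X closure_of (V - U) \<subseteq> X interior_of V" by auto
  qed auto
  have s1: "subtopology X ((U \<union> V) - (V - U)) = Y"
    unfolding X_def Y_def subtopology_subtopology by (rule arg_cong[where f="subtopology euclidean"]) auto
  have s2: "V - (V - U) = U \<inter> V" by auto
  have s3: "subtopology X (U \<union> V) = X"
    unfolding X_def subtopology_subtopology by simp
  have exc': "hom_induced j Y (U \<inter> V) X V id
    \<in> iso (relative_homology_group j Y (U \<inter> V)) (relative_homology_group j X V)"
    using exc unfolding s1 s2 s3 .
  have relX: "trivial_group (relative_homology_group j X V)"
    using exc' relY
    by (meson group_relative_homology_group is_isoI isomorphic_group_triviality)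
  have e3: "exact_seq([relative_homology_group j X V,
               reduced_homology_group j X,
               reduced_homology_group j (subtopology X V)],
              [hom_induced j X {} X V id, hom_induced j (subtopology X V) {} X {} id])"
    by (rule homology_exactness_reduced_3)
  have sXV: "subtopology X V = subtopology euclidean V"
    by (simp add: X_def subtopology_subtopology Int_absorb1)
  show ?thesis
    using exact_triv[OF e3 relX] tV sXV X_def by auto
qed

definition UF :: "((real^'n) \<times> (real^'n)) set \<Rightarrow> (real^'n) set" where
  "UF F = (\<Union>(a,b)\<in>F. box a b)"
definition goodD :: "'n set \<Rightarrow> ((real^'n) \<times> (real^'n)) set \<Rightarrow> bool" where
  "goodD D F \<longleftrightarrow> (\<forall>(a,b)\<in>F. \<forall>(a',b')\<in>F. \<forall>k. k \<notin> D \<longrightarrow> a$k = a'$k \<and> b$k = b'$k)"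
definition nonemp :: "((real^'n) \<times> (real^'n)) set \<Rightarrow> bool" where
  "nonemp F \<longleftrightarrow> (\<forall>(a,b)\<in>F. \<forall>k. a$k < b$k)"
definition setc :: "real^'n \<Rightarrow> 'n \<Rightarrow> real \<Rightarrow> real^'n" where
  "setc v i t = (\<chi> k. if k = i then t else v$k)"
definition slab :: "((real^'n) \<times> (real^'n)) set \<Rightarrow> 'n \<Rightarrow> real \<Rightarrow> real \<Rightarrow> ((real^'n) \<times> (real^'n)) set" where
  "slab F i \<alpha> \<beta> = (\<lambda>(a,b). (setc a i \<alpha>, setc b i \<beta>)) ` F"
definition ends :: "((real^'n) \<times> (real^'n)) set \<Rightarrow> 'n \<Rightarrow> real set" where
  "ends F i = (\<lambda>(a,b). a$i) ` F \<union> (\<lambda>(a,b). b$i) ` F"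

lemma setc_nth [simp]: "setc v i t $ k = (if k = i then t else v$k)"
  by (simp add: setc_def)

lemma open_UF: "open (UF F)"
  unfolding UF_def by (auto intro!: open_UN open_box)

lemma mem_UF: "x \<in> UF F \<longleftrightarrow> (\<exists>(a,b)\<in>F. \<forall>k. a$k < x$k \<and> x$k < b$k)"
  unfolding UF_def by (force simp: mem_box_cart)

lemma mem_UF_slab: "x \<in> UF (slab F i \<alpha> \<beta>) \<longleftrightarrow>
   (\<exists>(a,b)\<in>F. (\<forall>k. k \<noteq> i \<longrightarrow> a$k < x$k \<and> x$k < b$k) \<and> \<alpha> < x$i \<and> x$i < \<beta>)"
proof -
  have *: "(\<forall>k. setc a i \<alpha> $ k < x$k \<and> x$k < setc b i \<beta> $ k) \<longleftrightarrow>
     ((\<forall>k. k \<noteq> i \<longrightarrow> a$k < x$k \<and> x$k < b$k) \<and> \<alpha> < x$i \<and> x$i < \<beta>)" for a b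
    by (auto simp: setc_def)
  have "x \<in> UF (slab F i \<alpha> \<beta>) \<longleftrightarrow> (\<exists>(a,b)\<in>F. \<forall>k. setc a i \<alpha> $ k < x$k \<and> x$k < setc b i \<beta> $ k)"
    unfolding mem_UF slab_def by (simp add: split_def)
  then show ?thesis by (simp only: * split_def)
qed

lemma goodD_slab: "goodD D F \<Longrightarrow> goodD (D - {i}) (slab F i \<alpha> \<beta>)"
  unfolding goodD_def slab_def by (clarsimp; blast)

lemma nonemp_slab: "nonemp F \<Longrightarrow> \<alpha> < \<beta> \<Longrightarrow> nonemp (slab F i \<alpha> \<beta>)"
  unfolding nonemp_def slab_def by auto

lemma finite_slab: "finite F \<Longrightarrow> finite (slab F i \<alpha> \<beta>)"
  unfolding slab_def by simp

lemma convex_triv: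
  fixes S :: "'a::real_normed_vector set"
  assumes "convex S"
  shows "trivial_group (reduced_homology_group j (subtopology euclidean S))"
proof -
  have "contractible S" using assms by (rule convex_imp_contractible)
  then have "contractible_space (top_of_set S)" by simp
  then show ?thesis by (rule trivial_reduced_homology_group_contractible_space)
qed

lemma base_case:
  assumes "goodD {} F"
  shows "trivial_group (reduced_homology_group j (subtopology euclidean (UF F)))"
proof (cases "F = {}")
  case True
  then show ?thesis by (simp add: UF_def trivial_reduced_homology_group_empty)
next
  case False
  then obtain a b where ab: "(a,b) \<in> F" by auto
  have eq: "a' = a \<and> b' = b" if "(a',b') \<in> F" for a' b'
  proof -
    have "\<forall>k. a'$k = a$k \<and> b'$k = b$k"
      using assms ab that unfolding goodD_def by blast
    then show ?thesis by (simp add: vec_eq_iff)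
  qed
  have "UF F = box a b"
  proof
    show "UF F \<subseteq> box a b" unfolding UF_def using eq by fastforce
    show "box a b \<subseteq> UF F" unfolding UF_def using ab by blast
  qed
  then show ?thesis by (simp add: convex_triv)
qed

lemma ends_finite: "finite F \<Longrightarrow> finite (ends F i)"
  unfolding ends_def by auto

lemma UF_slabE:
  assumes "x \<in> UF (slab F i \<alpha> \<beta>)"
  obtains a b where "(a,b)\<in>F" "\<forall>k. k\<noteq>i \<longrightarrow> a$k < x$k \<and> x$k < b$k" "\<alpha> < x$i" "x$i < \<beta>"
  using assms unfolding mem_UF_slab by auto

lemma UF_slabI:
  "(a,b)\<in>F \<Longrightarrow> \<forall>k. k\<noteq>i \<longrightarrow> a$k < x$k \<and> x$k < b$k \<Longrightarrow> \<alpha> < x$i \<Longrightarrow> x$i < \<beta> \<Longrightarrow> x \<in> UF (slab F i \<alpha> \<beta>)"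
  unfolding mem_UF_slab by auto

lemma UFE:
  assumes "x \<in> UF F"
  obtains a b where "(a,b)\<in>F" "\<forall>k. a$k < x$k \<and> x$k < b$k"
  using assms unfolding mem_UF by auto

lemma UFI: "(a,b)\<in>F \<Longrightarrow> \<forall>k. a$k < x$k \<and> x$k < b$k \<Longrightarrow> x \<in> UF F"
  unfolding mem_UF by auto

lemma allk_split: "(\<forall>k. k\<noteq>i \<longrightarrow> P k) \<Longrightarrow> P i \<Longrightarrow> \<forall>k. P k"
  by metis

lemma goodD_alt: "goodD D F \<longleftrightarrow> (\<forall>p\<in>F. \<forall>q\<in>F. \<forall>k. k \<notin> D \<longrightarrow> fst p $ k = fst q $ k \<and> snd p $ k = snd q $ k)"
  unfolding goodD_def by (simp add: split_def)
lemma nonemp_alt: "nonemp F \<longleftrightarrow> (\<forall>p\<in>F. \<forall>k. fst p $ k < snd p $ k)"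
  unfolding nonemp_def by (simp add: split_def)
lemma nonempI: "(\<And>a b k. (a,b)\<in>F \<Longrightarrow> a$k < b$k) \<Longrightarrow> nonemp F"
  unfolding nonemp_alt by (metis prod.collapse)
lemma goodDI: "(\<And>a b a' b' k. (a,b)\<in>F \<Longrightarrow> (a',b')\<in>F \<Longrightarrow> k \<notin> D \<Longrightarrow> a$k = a'$k \<and> b$k = b'$k) \<Longrightarrow> goodD D F"
  unfolding goodD_alt by (metis prod.collapse)
lemma nonempD: "nonemp F \<Longrightarrow> (a,b)\<in>F \<Longrightarrow> a$k < b$k"
  unfolding nonemp_alt by (metis fst_conv snd_conv)
lemma goodDD: "goodD D F \<Longrightarrow> (a,b)\<in>F \<Longrightarrow> (a',b')\<in>F \<Longrightarrow> k \<notin> D \<Longrightarrow> a$k = a'$k \<and> b$k = b'$k"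
  unfolding goodD_alt by (metis fst_conv snd_conv)

lemma inner_step:
  fixes D :: "'n::finite set" and i :: 'n
  assumes outer: "\<And>F' j'. finite F' \<Longrightarrow> nonemp F' \<Longrightarrow> goodD (D - {i}) F' \<Longrightarrow> j' \<ge> int (card (D - {i}))
      \<Longrightarrow> trivial_group (reduced_homology_group j' (subtopology euclidean (UF F')))"
    and iD: "i \<in> D"
  shows "finite F \<Longrightarrow> nonemp F \<Longrightarrow> goodD D F \<Longrightarrow> j \<ge> int (card D)
      \<Longrightarrow> trivial_group (reduced_homology_group j (subtopology euclidean (UF F)))"
proof (induction "card (ends F i)" arbitrary: F j rule: less_induct)
  case less
  note fin = less.prems(1) and ne = less.prems(2) and good = less.prems(3) and jD = less.prems(4)
  define E where "E = ends F i"
  have fE: "finite E" using fin E_def ends_finite by blast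
  have cD1: "card D \<ge> 1" using iD card_gt_0_iff[of D] by fastforce
  have cD: "card (D - {i}) = card D - 1" "card D \<ge> 1" using iD cD1
    by (auto simp: card_Diff_singleton)
  have j0: "j \<noteq> 0" using jD cD by linarith
  have aE: "a$i \<in> E" and bE: "b$i \<in> E" and abi: "a$i < b$i" if "(a,b) \<in> F" for a b
    using that ne unfolding E_def ends_def nonemp_def by force+
  show ?case
  proof (cases "card E \<le> 2")
    case True
    have "goodD (D - {i}) F"
      unfolding goodD_def
    proof (clarify)
      fix a b a' b' k assume ab: "(a,b) \<in> F" and ab': "(a',b') \<in> F" and k: "k \<notin> D - {i}"
      show "a $ k = a' $ k \<and> b $ k = b' $ k"
      proof (cases "k = i")
        case False
        then show ?thesis using good ab ab' k unfolding goodD_def by fastforce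
      next
        case True
        have c3: False if "x \<in> E" "y \<in> E" "z \<in> E" "x < y" "y < z" for x y z
        proof -
          have "card {x,y,z} = 3" using that by auto
          moreover have "card {x,y,z} \<le> card E" using that fE by (intro card_mono) auto
          ultimately show False using \<open>card E \<le> 2\<close> by simp
        qed
        have "a$i = a'$i"
          using c3[of "a$i" "a'$i" "b'$i"] c3[of "a'$i" "a$i" "b$i"] aE bE abi ab ab'
          by (metis linorder_neqE_linordered_idom)
        moreover have "b$i = b'$i"
          using c3[of "a$i" "b$i" "b'$i"] c3[of "a'$i" "b'$i" "b$i"] aE bE abi ab ab'
          by (metis linorder_neqE_linordered_idom)
        ultimately show ?thesis using True by simp
      qed
    qed
    then show ?thesis using outer[OF fin ne] jD cD by simp
  next
    case False
    define em where "em = Max E"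
    define e1 where "e1 = Max (E - {em})"
    define e2 where "e2 = Max (E - {em} - {e1})"
    have Ene: "E \<noteq> {}" using False by auto
    have emE: "em \<in> E" using fE Ene em_def by simp
    have E1ne: "E - {em} \<noteq> {}"
    proof
      assume "E - {em} = {}"
      then have "E \<subseteq> {em}" by auto
      then have "card E \<le> card {em}" by (intro card_mono) auto
      then show False using False by simp
    qed
    have e1E: "e1 \<in> E - {em}" unfolding e1_def using fE E1ne by (intro Max_in) auto
    have E2ne: "E - {em} - {e1} \<noteq> {}"
    proof
      assume "E - {em} - {e1} = {}"
      then have "E \<subseteq> {em, e1}" by auto
      then have "card E \<le> card {em, e1}" by (intro card_mono) auto
      also have "\<dots> \<le> 2" by (simp add: card_insert_if)
      finally show False using False by simp
    qed
    have e2E: "e2 \<in> E - {em} - {e1}" unfolding e2_def using fE E2ne by (intro Max_in) auto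
    have le_em: "x \<le> em" if "x \<in> E" for x using fE that em_def by simp
    have le_e1: "x \<le> e1" if "x \<in> E" "x \<noteq> em" for x unfolding e1_def using fE that by (intro Max_ge) auto
    have le_e2: "x \<le> e2" if "x \<in> E" "x \<noteq> em" "x \<noteq> e1" for x unfolding e2_def using fE that by (intro Max_ge) auto
    have e1em: "e1 < em" using e1E le_em by force
    have e2e1: "e2 < e1" using e2E le_e1 by force
    have a_lt_e1: "a$i \<le> e2" if "(a,b) \<in> F" "a$i < e1" for a b
      using le_e2[OF aE[OF that(1)]] that e1em by force
    have b_gt_e1: "b$i = em" if "(a,b) \<in> F" "e1 < b$i" for a b
      using le_e1[OF bE[OF that(1)]] le_em[OF bE[OF that(1)]] that by force
    have a_le_e1: "a$i \<le> e1" if "(a,b) \<in> F" for a b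
      using le_e1[OF aE[OF that]] le_em[OF bE[OF that]] abi[OF that] by force
    define FP where "FP = (\<lambda>(a,b). (a, setc b i (min (b$i) e1))) ` {(a,b)\<in>F. a$i < e1}"
    define FC where "FC = {(a,b)\<in>F. a$i < e1 \<and> e1 < b$i}"
    define FG where "FG = {(a,b)\<in>F. e1 < b$i}"
    define P where "P = UF FP"
    define C where "C = UF (slab FC i e2 em)"
    define G where "G = UF (slab FG i e1 em)"
    have P_eq: "x \<in> P \<longleftrightarrow> x \<in> UF F \<and> x$i < e1" for x
    proof
      assume "x \<in> P"
      then obtain a b where ab: "(a,b) \<in> F" "a$i < e1" and x: "\<forall>k. a$k < x$k \<and> x$k < setc b i (min (b$i) e1) $ k"
        unfolding P_def FP_def mem_UF by auto
      have "\<forall>k. a$k < x$k \<and> x$k < b$k"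
      proof
        fix k show "a$k < x$k \<and> x$k < b$k" using x[rule_format, of k] by (cases "k = i") auto
      qed
      moreover have "x$i < e1" using x[rule_format, of i] by simp
      ultimately show "x \<in> UF F \<and> x$i < e1" using ab unfolding mem_UF by blast
    next
      assume "x \<in> UF F \<and> x$i < e1"
      then obtain a b where ab: "(a,b) \<in> F" and x: "\<forall>k. a$k < x$k \<and> x$k < b$k" and xi: "x$i < e1"
        unfolding mem_UF by blast
      have ai: "a$i < e1" using x xi by (meson less_trans)
      have "\<forall>k. a$k < x$k \<and> x$k < setc b i (min (b$i) e1) $ k"
      proof
        fix k show "a$k < x$k \<and> x$k < setc b i (min (b$i) e1) $ k" using x[rule_format, of k] xi by (cases "k = i") auto
      qed
      moreover have "(a, setc b i (min (b$i) e1)) \<in> FP" unfolding FP_def using ab ai by force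
      ultimately show "x \<in> P" unfolding P_def mem_UF by blast
    qed
    have C_sub: "x \<in> UF F" if xC0: "x \<in> C" for x
    proof -
      obtain a b where ab: "(a,b) \<in> FC" and x: "\<forall>k. k \<noteq> i \<longrightarrow> a$k < x$k \<and> x$k < b$k" "e2 < x$i" "x$i < em"
        using xC0 unfolding C_def by (rule UF_slabE)
      have abF: "(a,b) \<in> F" "a$i < e1" "e1 < b$i" using ab unfolding FC_def by auto
      have "a$i \<le> e2" "b$i = em" using abF a_lt_e1 b_gt_e1 by auto
      then have "\<forall>k. a$k < x$k \<and> x$k < b$k" using x by (metis order_le_less_trans)
      then show ?thesis by (rule UFI[OF abF(1)])
    qed
    have G_eq: "x \<in> G \<longleftrightarrow> x \<in> UF F \<and> e1 < x$i" for x
    proof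
      assume "x \<in> G"
      then obtain a b where ab: "(a,b) \<in> FG" and x: "\<forall>k. k \<noteq> i \<longrightarrow> a$k < x$k \<and> x$k < b$k" "e1 < x$i" "x$i < em"
        unfolding G_def by (rule UF_slabE)
      have abF: "(a,b) \<in> F" "e1 < b$i" using ab unfolding FG_def by auto
      have "a$i \<le> e1" "b$i = em" using abF a_le_e1 b_gt_e1 by auto
      then have "\<forall>k. a$k < x$k \<and> x$k < b$k" using x by (metis order_le_less_trans)
      then have "x \<in> UF F" by (rule UFI[OF abF(1)])
      then show "x \<in> UF F \<and> e1 < x$i" using x by simp
    next
      assume "x \<in> UF F \<and> e1 < x$i"
      then obtain a b where ab: "(a,b) \<in> F" "\<forall>k. a$k < x$k \<and> x$k < b$k" and xi: "e1 < x$i"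
        by (auto elim: UFE)
      have "e1 < b$i" using ab xi by (meson less_trans)
      then have "b$i = em" "(a,b) \<in> FG" using b_gt_e1 ab FG_def by auto
      then show "x \<in> G" unfolding G_def using ab xi by (intro UF_slabI) auto
    qed
    have PC_eq: "P \<inter> C = UF (slab FC i e2 e1)"
    proof (rule Set.set_eqI, rule iffI)
      fix x assume x: "x \<in> P \<inter> C"
      then have xi: "x$i < e1" using P_eq by blast
      obtain a b where ab: "(a,b) \<in> FC" and xx: "\<forall>k. k \<noteq> i \<longrightarrow> a$k < x$k \<and> x$k < b$k" "e2 < x$i" "x$i < em"
        using x unfolding C_def by (auto elim: UF_slabE)
      show "x \<in> UF (slab FC i e2 e1)" using ab xx xi by (intro UF_slabI) auto
    next
      fix x assume x: "x \<in> UF (slab FC i e2 e1)"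
      obtain a b where ab: "(a,b) \<in> FC" and xx: "\<forall>k. k \<noteq> i \<longrightarrow> a$k < x$k \<and> x$k < b$k" "e2 < x$i" "x$i < e1"
        using x by (rule UF_slabE)
      have xC: "x \<in> C" unfolding C_def using ab xx e1em by (intro UF_slabI) auto
      then show "x \<in> P \<inter> C" using C_sub P_eq xx by blast
    qed
    have PCG_eq: "(P \<union> C) \<inter> G = UF (slab FC i e1 em)"
    proof (rule Set.set_eqI, rule iffI)
      fix x assume x: "x \<in> (P \<union> C) \<inter> G"
      then have xi: "e1 < x$i" using G_eq by blast
      then have "x \<in> C" using x P_eq by auto
      then obtain a b where ab: "(a,b) \<in> FC" and xx: "\<forall>k. k \<noteq> i \<longrightarrow> a$k < x$k \<and> x$k < b$k" "e2 < x$i" "x$i < em"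
        unfolding C_def by (rule UF_slabE)
      show "x \<in> UF (slab FC i e1 em)" using ab xx xi by (intro UF_slabI) auto
    next
      fix x assume x: "x \<in> UF (slab FC i e1 em)"
      obtain a b where ab: "(a,b) \<in> FC" and xx: "\<forall>k. k \<noteq> i \<longrightarrow> a$k < x$k \<and> x$k < b$k" "e1 < x$i" "x$i < em"
        using x by (rule UF_slabE)
      have xC: "x \<in> C" unfolding C_def using ab xx e2e1 by (intro UF_slabI) auto
      then show "x \<in> (P \<union> C) \<inter> G" using C_sub G_eq xx by blast
    qed
    have all_eq: "(P \<union> C) \<union> G = UF F"
    proof (rule Set.set_eqI, rule iffI)
      fix x assume "x \<in> (P \<union> C) \<union> G" then show "x \<in> UF F" using P_eq G_eq C_sub by blast
    next
      fix x assume x: "x \<in> UF F"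
      show "x \<in> (P \<union> C) \<union> G"
      proof (cases "x$i = e1")
        case True
        obtain a b where ab: "(a,b) \<in> F" "\<forall>k. a$k < x$k \<and> x$k < b$k" using x by (rule UFE)
        then have "(a,b) \<in> FC" using True FC_def by auto
        then have "x \<in> C" unfolding C_def using ab True e2e1 e1em by (intro UF_slabI) auto
        then show ?thesis by blast
      next
        case False
        then show ?thesis using x P_eq G_eq by (cases "x$i < e1") auto
      qed
    qed
    have sFC: "FC \<subseteq> F" "FG \<subseteq> F" unfolding FC_def FG_def by auto
    have fFC: "finite FC" "finite FG" using fin sFC finite_subset by blast+
    have neFC: "nonemp FC" "nonemp FG" using ne sFC unfolding nonemp_def by blast+
    have gFC: "goodD D FC" "goodD D FG" using good sFC unfolding goodD_def by blast+
    have jD1: "j \<ge> int (card (D - {i}))" "j - 1 \<ge> int (card (D - {i}))" using jD cD by auto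
    have tC: "trivial_group (reduced_homology_group j (subtopology euclidean C))"
      unfolding C_def using e2e1 e1em
      by (intro outer finite_slab nonemp_slab goodD_slab fFC neFC gFC jD1) auto
    have tPC: "trivial_group (reduced_homology_group (j-1) (subtopology euclidean (P \<inter> C)))"
      unfolding PC_eq using e2e1
      by (intro outer finite_slab nonemp_slab goodD_slab fFC neFC gFC jD1) auto
    have tG: "trivial_group (reduced_homology_group j (subtopology euclidean G))"
      unfolding G_def using e1em
      by (intro outer finite_slab nonemp_slab goodD_slab fFC neFC gFC jD1) auto
    have tPCG: "trivial_group (reduced_homology_group (j-1) (subtopology euclidean ((P \<union> C) \<inter> G)))"
      unfolding PCG_eq using e1em
      by (intro outer finite_slab nonemp_slab goodD_slab fFC neFC gFC jD1) auto
    have tP: "trivial_group (reduced_homology_group j (subtopology euclidean P))"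
      unfolding P_def
    proof (rule less.hyps)
      have "{(a,b)\<in>F. a$i < e1} \<subseteq> F" by auto
      then have "finite {(a,b)\<in>F. a$i < e1}" using fin by (rule finite_subset)
      then show "finite FP" unfolding FP_def by (rule finite_imageI)
      show "nonemp FP"
      proof (rule nonempI)
        fix a' b' k assume "(a',b') \<in> FP"
        then obtain a b where ab: "(a,b) \<in> F" "a$i < e1" and eq: "a' = a" "b' = setc b i (min (b$i) e1)"
          unfolding FP_def by auto
        show "a' $ k < b' $ k"
          using nonempD[OF ne ab(1), of k] ab abi[OF ab(1)] unfolding eq by (cases "k = i") auto
      qed
      show "goodD D FP"
      proof (rule goodDI)
        fix a1 b1 a2 b2 k assume p1: "(a1,b1) \<in> FP" and p2: "(a2,b2) \<in> FP" and k: "k \<notin> D"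
        obtain a b where ab: "(a,b) \<in> F" and eq: "a1 = a" "b1 = setc b i (min (b$i) e1)"
          using p1 unfolding FP_def by auto
        obtain a' b' where ab': "(a',b') \<in> F" and eq': "a2 = a'" "b2 = setc b' i (min (b'$i) e1)"
          using p2 unfolding FP_def by auto
        have "k \<noteq> i" using iD k by auto
        moreover have "a$k = a'$k \<and> b$k = b'$k" by (rule goodDD[OF good ab ab' k])
        ultimately show "a1 $ k = a2 $ k \<and> b1 $ k = b2 $ k" unfolding eq eq' by simp
      qed
      show "int (card D) \<le> j" by (rule jD)
      have "ends FP i \<subseteq> E - {em}"
      proof
        fix e assume "e \<in> ends FP i"
        then obtain a b where ab: "(a,b) \<in> F" "a$i < e1" and e: "e = a$i \<or> e = min (b$i) e1"
          unfolding ends_def FP_def by auto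
        show "e \<in> E - {em}"
        proof (cases "e = a$i")
          case True then show ?thesis using aE[OF ab(1)] ab(2) e1em by auto
        next
          case False
          then have e': "e = min (b$i) e1" using e by auto
          show ?thesis
          proof (cases "b$i \<le> e1")
            case True then show ?thesis using e' bE[OF ab(1)] e1em by auto
          next
            case False then show ?thesis using e' e1E by auto
          qed
        qed
      qed
      then have "card (ends FP i) \<le> card (E - {em})" using fE by (intro card_mono) auto
      also have "\<dots> < card E" using fE emE by (rule card_Diff1_less)
      finally show "card (ends FP i) < card (ends F i)" unfolding E_def .
    qed
    have tPC2: "trivial_group (reduced_homology_group j (subtopology euclidean (P \<union> C)))"
      by (rule mv_step2[OF _ _ j0 tP tC tPC]) (auto simp: P_def C_def open_UF)
    have "trivial_group (reduced_homology_group j (subtopology euclidean ((P \<union> C) \<union> G)))"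
      by (rule mv_step2[OF _ _ j0 tPC2 tG tPCG]) (auto simp: P_def C_def G_def open_UF intro: open_Un)
    then show ?thesis using all_eq by simp
  qed
qed

lemma boxes_vanish:
  fixes D :: "'n::finite set"
  shows "finite F \<Longrightarrow> nonemp F \<Longrightarrow> goodD D F \<Longrightarrow> j \<ge> int (card D)
      \<Longrightarrow> trivial_group (reduced_homology_group j (subtopology euclidean (UF F)))"
proof (induction "card D" arbitrary: D F j rule: less_induct)
  case less
  show ?case
  proof (cases "D = {}")
    case True
    then show ?thesis using base_case less.prems(3) by blast
  next
    case False
    then obtain i where iD: "i \<in> D" by blast
    have lt: "card (D - {i}) < card D" by (rule card_Diff1_less[OF _ iD]) simp
    show ?thesis
      by (rule inner_step[OF _ iD less.prems]) (rule less.hyps[OF lt], assumption+)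
  qed
qed

lemma dim_vanish:
  fixes U :: "(real^'n) set"
  assumes oU: "open U" and jn: "j \<ge> int CARD('n)"
  shows "trivial_group (reduced_homology_group j (subtopology euclidean U))"
proof -
  have c1: "CARD('n) \<ge> 1" using zero_less_card_finite[where 'a='n] by linarith
  define n where "n = nat j"
  have jeq: "j = int n" and n1: "n \<ge> 1" using jn c1 unfolding n_def by linarith+
  have j0: "j \<noteq> 0" using jeq n1 by simp
  define X where "X = subtopology (euclidean :: (real^'n) topology) U"
  have "carrier (homology_group j X) \<subseteq> {one (homology_group j X)}"
  proof
    fix x assume "x \<in> carrier (homology_group j X)"
    then obtain c where c: "singular_relcycle n X {} c" and xeq: "x = homologous_rel_set n X {} c"
      unfolding jeq carrier_relative_homology_group by auto
    have chX: "singular_chain n X c" and bd: "chain_boundary n c = 0"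
      using c by (auto simp: singular_cycle)
    then have chE: "singular_chain n euclidean c" and imU: "\<forall>f\<in>Poly_Mapping.keys c. f ` standard_simplex n \<subseteq> U"
      unfolding X_def singular_chain_subtopology by auto
    define K where "K = (\<Union>f\<in>Poly_Mapping.keys c. f ` standard_simplex n)"
    have KU: "K \<subseteq> U" using imU K_def by auto
    have cK: "compact K"
      unfolding K_def
    proof (rule compact_UN)
      show "finite (Poly_Mapping.keys c)" by simp
      fix f assume f: "f \<in> Poly_Mapping.keys c"
      then have "singular_simplex n euclidean f" using chE unfolding singular_chain_def by auto
      then have "continuous_map (subtopology (powertop_real UNIV) (standard_simplex n)) euclidean f"
        unfolding singular_simplex_def by auto
      moreover have "compactin (subtopology (powertop_real UNIV) (standard_simplex n)) (standard_simplex n)"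
        by (simp add: compactin_standard_simplex)
      ultimately have "compactin euclidean (f ` standard_simplex n)" using image_compactin by blast
      then show "compact (f ` standard_simplex n)" by simp
    qed
    define I where "I = {(a,b). box a b \<subseteq> U \<and> (\<forall>k. (a::real^'n)$k < b$k)}"
    have cover: "K \<subseteq> (\<Union>p\<in>I. (\<lambda>(a,b). box a b) p)"
    proof
      fix y assume "y \<in> K"
      then have "y \<in> U" using KU by auto
      then obtain a b where ab: "box a b \<subseteq> U" "y \<in> box a b"
        using open_contains_box[OF oU] by metis
      then have "\<forall>k. a$k < b$k" by (auto simp: mem_box_cart) (meson less_trans)
      then have "(a,b) \<in> I" using ab I_def by auto
      then show "y \<in> (\<Union>p\<in>I. (\<lambda>(a,b). box a b) p)" using ab by force
    qed
    obtain F where FI: "F \<subseteq> I" and fF: "finite F" and KF: "K \<subseteq> (\<Union>p\<in>F. (\<lambda>(a,b). box a b) p)"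
      by (rule compactE_image[OF cK _ cover]) (auto simp: open_box)
    have KW: "K \<subseteq> UF F" using KF unfolding UF_def by simp
    have WU: "UF F \<subseteq> U" using FI unfolding UF_def I_def by auto
    have neF: "nonemp F"
      by (rule nonempI) (use FI I_def in auto)
    have gF: "goodD UNIV F" by (rule goodDI) auto
    have "trivial_group (reduced_homology_group j (subtopology euclidean (UF F)))"
      by (rule boxes_vanish[OF fF neF gF]) (use jn in simp)
    then have tW0: "trivial_group (homology_group j (subtopology euclidean (UF F)))"
      by (simp only: un_reduced_homology_group[OF j0])
    have tW: "trivial_group (homology_group (int n) (subtopology euclidean (UF F)))"
      using tW0 unfolding jeq .
    have cW: "singular_relcycle n (subtopology euclidean (UF F)) {} c"
      unfolding singular_cycle singular_chain_subtopology using chE bd KW K_def by auto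
    then have "homologous_rel_set n (subtopology euclidean (UF F)) {} c
        \<in> carrier (homology_group (int n) (subtopology euclidean (UF F)))"
      unfolding carrier_relative_homology_group by auto
    then have "homologous_rel_set n (subtopology euclidean (UF F)) {} c
        = singular_relboundary_set n (subtopology euclidean (UF F)) {}"
      using tW by (simp add: trivial_group_def)
    then have "singular_relboundary n (subtopology euclidean (UF F)) {} c"
      by (simp add: homologous_rel_set_eq_relboundary)
    then have "singular_relboundary n X {} c"
      unfolding X_def by (rule singular_boundary_mono[OF WU])
    then show "x \<in> {one (homology_group j X)}"
      using xeq jeq by (simp add: homologous_rel_set_eq_relboundary)
  qed
  then have "trivial_group (homology_group j X)"
    using group.trivial_group_subset[OF group_relative_homology_group] by blast
  then show ?thesis unfolding X_def by (simp only: un_reduced_homology_group[OF j0])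
qed

lemma helly_ind:
  fixes A :: "nat \<Rightarrow> (real^'n) set"
  assumes "finite I" "I \<noteq> {}" "\<forall>i\<in>I. open (A i)"
   "\<forall>S. S \<subseteq> I \<longrightarrow> S \<noteq> {} \<longrightarrow> card S \<le> k \<longrightarrow>
        (\<forall>q. trivial_group (reduced_homology_group q (subtopology euclidean (\<Union>i\<in>S. A i))))"
   "j \<ge> int CARD('n) - int k"
  shows "trivial_group (reduced_homology_group j (subtopology euclidean (\<Inter>i\<in>I. A i)))"
  using assms
proof (induction "card I" arbitrary: I A k j rule: less_induct)
  case less
  have oI: "open (\<Inter>i\<in>I. A i)" using less.prems by (intro open_INT) auto
  show ?case
  proof (cases "k = 0")
    case True
    then show ?thesis using dim_vanish[OF oI] less.prems by simp
  next
    case k: False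
    show ?thesis
    proof (cases "card I = 1")
      case True
      then obtain i where I: "I = {i}" by (meson card_1_singletonE)
      have "trivial_group (reduced_homology_group j (subtopology euclidean (\<Union>i\<in>{i}. A i)))"
        using less.prems(4)[rule_format, of "{i}" j] k I by simp
      then show ?thesis using I by simp
    next
      case False
      obtain i0 where i0: "i0 \<in> I" using less.prems by blast
      define I' where "I' = I - {i0}"
      have I'ne: "I' \<noteq> {}" unfolding I'_def
      proof
        assume "I - {i0} = {}"
        then have "I = {i0}" using i0 by auto
        then show False using False by simp
      qed
      have cI': "card I' < card I" unfolding I'_def by (rule card_Diff1_less[OF less.prems(1) i0])
      have fI': "finite I'" using less.prems(1) I'_def by simp
      define B where "B = (\<Inter>i\<in>I'. A i)"
      define C where "C = A i0"
      have Ieq: "I = insert i0 I'" using i0 unfolding I'_def by auto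
      have eqI: "(\<Inter>i\<in>I. A i) = B \<inter> C" unfolding B_def C_def Ieq by auto
      have oB: "open B" unfolding B_def using less.prems(3) fI' I'_def by (intro open_INT) auto
      have oC: "open C" unfolding C_def using less.prems(3) i0 by auto
      have tB: "trivial_group (reduced_homology_group j (subtopology euclidean B))"
        unfolding B_def
      proof (rule less.hyps[OF cI' fI' I'ne, where k=k])
        show "\<forall>i\<in>I'. open (A i)" using less.prems(3) I'_def by blast
        show "\<forall>S\<subseteq>I'. S \<noteq> {} \<longrightarrow> card S \<le> k \<longrightarrow>
          (\<forall>q. trivial_group (reduced_homology_group q (subtopology euclidean (\<Union>i\<in>S. A i))))"
          using less.prems(4) I'_def by blast
        show "int CARD('n) - int k \<le> j" using less.prems(5) .
      qed
      have tC: "trivial_group (reduced_homology_group j (subtopology euclidean C))"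
      proof -
        have "trivial_group (reduced_homology_group j (subtopology euclidean (\<Union>i\<in>{i0}. A i)))"
          using less.prems(4)[rule_format, of "{i0}" j] k i0 by simp
        then show ?thesis unfolding C_def by simp
      qed
      have eqU: "B \<union> C = (\<Inter>i\<in>I'. A i \<union> A i0)" unfolding B_def C_def using I'ne by auto
      have tU: "trivial_group (reduced_homology_group (j+1) (subtopology euclidean (B \<union> C)))"
        unfolding eqU
      proof (rule less.hyps[OF cI' fI' I'ne, where k="k-1"])
        show "\<forall>i\<in>I'. open (A i \<union> A i0)" using less.prems(3) i0 by (auto simp: I'_def)
        show "int CARD('n) - int (k - 1) \<le> j + 1" using less.prems(5) k by simp
        show "\<forall>S\<subseteq>I'. S \<noteq> {} \<longrightarrow> card S \<le> k - 1 \<longrightarrow>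
          (\<forall>q. trivial_group (reduced_homology_group q (subtopology euclidean (\<Union>i\<in>S. A i \<union> A i0))))"
        proof (intro allI impI)
          fix S q assume S: "S \<subseteq> I'" "S \<noteq> {}" "card S \<le> k - 1"
          have fS: "finite S" using S fI' finite_subset by blast
          have "i0 \<notin> S" using S I'_def by auto
          then have "card (insert i0 S) \<le> k" using S fS k by simp
          moreover have "insert i0 S \<subseteq> I" using S i0 I'_def by auto
          moreover have "(\<Union>i\<in>S. A i \<union> A i0) = (\<Union>i\<in>insert i0 S. A i)" using S by auto
          ultimately show "trivial_group (reduced_homology_group q (subtopology euclidean (\<Union>i\<in>S. A i \<union> A i0)))"
            using less.prems(4)[rule_format, of "insert i0 S" q] by simp
        qed
      qed
      show ?thesis unfolding eqI by (rule mv_step[OF oB oC tB tC tU])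
    qed
  qed
qed

lemma red_neg: "p < 0 \<Longrightarrow> trivial_group (reduced_homology_group p X)"
proof -
  assume p: "p < 0"
  have "trivial_group (homology_group p X)" using p by simp
  then obtain a where "carrier (homology_group p X) \<subseteq> {a}" by (auto simp: trivial_group_def)
  then have "carrier (reduced_homology_group p X) \<subseteq> {a}"
    using carrier_reduced_homology_group_subset by blast
  then show ?thesis using group.trivial_group_alt[OF group_reduced_homology_group] by blast
qed

theorem lemma5p2:
  fixes A :: "nat \<Rightarrow> (real ^ 'n) set" and m :: nat
  assumes opn: "\<And>i. i \<in> {1..m} \<Longrightarrow> open (A i)"
    and cells: "\<And>i. i \<in> {1..m} \<Longrightarrow> homology_cell (subtopology euclidean (A i))"
    and unions: "\<And>S. S \<subseteq> {1..m} \<Longrightarrow> S \<noteq> {} \<Longrightarrow> card S \<le> CARD('n) \<Longrightarrow>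
                   homology_cell (subtopology euclidean (\<Union>i\<in>S. A i))"
  shows "(\<Inter>i\<in>{1..m}. A i) = {} \<or> homology_cell (subtopology euclidean (\<Inter>i\<in>{1..m}. A i))"
proof (cases "m = 0")
  case True
  then have "(\<Inter>i\<in>{1..m}. A i) = UNIV" by simp
  moreover have "contractible_space (subtopology euclidean (UNIV :: (real^'n) set))"
    using contractible_space_top_of_set convex_imp_contractible convex_UNIV by blast
  ultimately show ?thesis
    by (simp add: homology_cell_def trivial_reduced_homology_group_contractible_space)
next
  case False
  have t: "trivial_group (reduced_homology_group p (subtopology euclidean (\<Inter>i\<in>{1..m}. A i)))" for p
  proof (cases "p < 0")
    case True then show ?thesis by (rule red_neg)
  next
    case False
    show ?thesis
    proof (rule helly_ind[where k="CARD('n)"])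
      show "{1..m} \<noteq> {}" using \<open>m \<noteq> 0\<close> by simp
      show "\<forall>i\<in>{1..m}. open (A i)" using opn by blast
      show "\<forall>S\<subseteq>{1..m}. S \<noteq> {} \<longrightarrow> card S \<le> CARD('n) \<longrightarrow>
        (\<forall>q. trivial_group (reduced_homology_group q (subtopology euclidean (\<Union>i\<in>S. A i))))"
        using unions by (simp add: homology_cell_def)
      show "int CARD('n) - int CARD('n) \<le> p" using False by simp
    qed simp
  qed
  then show ?thesis by (simp add: homology_cell_def)
qed

end
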